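(* Let $V\subset\mathbb{R}^d$ be a finite antichain, $p\in S_V$, and let $F$ be an $i$-flat of $S_V$. Then $p\in F$ if and only if there exist $v\in V_F$ and $q\in S_V$ such that $q\rhd_i v$ and $v\le p\le q$.
   Context: For $x,y\in\mathbb{R}^d$, $x\le y$ (dominance order) means $x_i\le y_i$ for all $i$; $y\rhd x$ means $y_i>x_i$ for all $i$; $y\rhd_i x$ means $y_i=x_i$ and $y_j>x_j$ for all $j\neq i$. $V\subset\mathbb{R}^d$ is a finite antichain in the dominance order (elements are called minima). The orthogonal surface $S_V$ is the topological boundary of $\langle V\rangle=\{x: x\ge v\text{ for some }v\in V\}$; equivalently $p\in S_V$ iff there is $v\in V$ with $v\le p$ and no $w\in V$ with $p\rhd w$. Flats: $U_i(v)=\{p\in S_V: p\rhd_i v\}$; for $v,w\in V$ put $v\sim_i w$ iff $U_i(v)\cap U_i(w)\neq\emptyset$, and let $\sim_i^c$ be the reflexive–transitive closure; the $i$-flat of $v$ is $F_i(v)=\overline{\bigcup_{w\sim_i^c v}U_i(w)}$ (topological closure), and an $i$-flat is any set of this form. For an $i$-flat $F$ let $V_F=F\cap V$ (the $\sim_i^c$-class of minima defining $F$). *)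

theory Defs
  imports "HOL-Analysis.Analysis"
begin

definition dom_le :: "real^'d \<Rightarrow> real^'d \<Rightarrow> bool" where
  "dom_le x y \<longleftrightarrow> (\<forall>i. x$i \<le> y$i)"

definition strict_dom :: "real^'d \<Rightarrow> real^'d \<Rightarrow> bool" where
  "strict_dom y x \<longleftrightarrow> (\<forall>i. y$i > x$i)"

definition dom_i :: "'d \<Rightarrow> real^'d \<Rightarrow> real^'d \<Rightarrow> bool" where
  "dom_i i y x \<longleftrightarrow> y$i = x$i \<and> (\<forall>j. j \<noteq> i \<longrightarrow> y$j > x$j)"

definition dom_antichain :: "(real^'d) set \<Rightarrow> bool" where
  "dom_antichain V \<longleftrightarrow> (\<forall>v\<in>V. \<forall>w\<in>V. dom_le v w \<longrightarrow> v = w)"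

definition orth_surface :: "(real^'d) set \<Rightarrow> (real^'d) set" where
  "orth_surface V = {p. (\<exists>v\<in>V. dom_le v p) \<and> \<not> (\<exists>w\<in>V. strict_dom p w)}"

definition U_flat :: "'d \<Rightarrow> (real^'d) set \<Rightarrow> real^'d \<Rightarrow> (real^'d) set" where
  "U_flat i V v = {p \<in> orth_surface V. dom_i i p v}"

definition sim_i :: "'d \<Rightarrow> (real^'d) set \<Rightarrow> ((real^'d) \<times> (real^'d)) set" where
  "sim_i i V = {(v, w). v \<in> V \<and> w \<in> V \<and> U_flat i V v \<inter> U_flat i V w \<noteq> {}}"

definition i_flat_of :: "'d \<Rightarrow> (real^'d) set \<Rightarrow> real^'d \<Rightarrow> (real^'d) set" where
  "i_flat_of i V v = closure (\<Union> {U_flat i V w | w. (v, w) \<in> (sim_i i V)\<^sup>*})"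

definition is_i_flat :: "'d \<Rightarrow> (real^'d) set \<Rightarrow> (real^'d) set \<Rightarrow> bool" where
  "is_i_flat i V F \<longleftrightarrow> (\<exists>v\<in>V. F = i_flat_of i V v)"

end

theory Submission
  imports Defs
begin

lemma S_between:
  assumes "v \<in> V" "dom_le v y" "dom_le y q" "q \<in> orth_surface V"
  shows "y \<in> orth_surface V"
proof -
  have "\<not> strict_dom y w" if "w \<in> V" for w
  proof
    assume "strict_dom y w"
    then have "strict_dom q w" using assms(3) unfolding strict_dom_def dom_le_def
      by (meson less_le_trans)
    then show False using assms(4) that unfolding orth_surface_def by blast
  qed
  then show ?thesis using assms(1,2) unfolding orth_surface_def by blast
qed

lemma closure_U_sub:
  "closure (U_flat i V w) \<subseteq> {x. x$i = w$i \<and> (\<forall>j. w$j \<le> x$j)}"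
proof (rule closure_minimal)
  show "U_flat i V w \<subseteq> {x. x$i = w$i \<and> (\<forall>j. w$j \<le> x$j)}"
    unfolding U_flat_def dom_i_def by (auto intro: less_imp_le) (metis order.strict_implies_order order_refl)
  have "closed {x::real^'a. x$i = w$i}"
    by (intro closed_Collect_eq continuous_intros)
  moreover have "closed {x::real^'a. \<forall>j. w$j \<le> x$j}"
    by (intro closed_Collect_all closed_Collect_le continuous_intros)
  ultimately show "closed {x::real^'a. x$i = w$i \<and> (\<forall>j. w$j \<le> x$j)}"
    using closed_Int by (simp add: Collect_conj_eq)
qed

lemma L2:
  assumes "v \<in> V" "q \<in> U_flat i V v" "dom_le v p" "dom_le p q"
  shows "p \<in> closure (U_flat i V v)"
  unfolding closure_approachable
proof (intro allI impI)
  fix e :: real assume e: "e > 0"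
  define t where "t = min 1 (e / (norm (q - p) + 1))"
  have t0: "t > 0" using e unfolding t_def by (smt (verit) divide_pos_pos norm_ge_zero)
  have t1: "t \<le> 1" by (simp add: t_def)
  define y where "y = p + t *\<^sub>R (q - p)"
  have qS: "q \<in> orth_surface V" and qd: "dom_i i q v" using assms(2) unfolding U_flat_def by auto
  have yq: "dom_le y q" using assms(4) t1 unfolding dom_le_def y_def
  proof -
    { fix j
      have "p$j \<le> q$j" using assms(4) unfolding dom_le_def by auto
      then have "p$j + t * (q$j - p$j) \<le> q$j" using t1
        by (metis add.commute diff_add_cancel diff_ge_0_iff_ge le_diff_eq mult_left_le_one_le t0 less_imp_le) }
    then show "\<forall>i. (p + t *\<^sub>R (q - p)) $ i \<le> q $ i" by simp
  qed
  have vy: "dom_le v y" unfolding dom_le_def y_def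
  proof
    fix j
    have "v$j \<le> p$j" "p$j \<le> q$j" using assms(3,4) unfolding dom_le_def by auto
    then show "v$j \<le> (p + t *\<^sub>R (q - p))$j" using t0 by simp (smt (verit, best) mult_nonneg_nonneg)
  qed
  have yS: "y \<in> orth_surface V" using S_between[OF assms(1) vy yq qS] .
  have ydi: "dom_i i y v" unfolding dom_i_def
  proof
    have "v$i \<le> p$i" "p$i \<le> q$i" "q$i = v$i" using assms(3,4) qd unfolding dom_le_def dom_i_def by blast+
    then show "y$i = v$i" unfolding y_def by simp
    show "\<forall>j. j \<noteq> i \<longrightarrow> v $ j < y $ j"
    proof (intro allI impI)
      fix j assume "j \<noteq> i"
      then have a: "v$j < q$j" using qd unfolding dom_i_def by auto
      have b: "v$j \<le> p$j" using assms(3) unfolding dom_le_def by auto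
      have "y$j = (1 - t) * p$j + t * q$j" unfolding y_def by (simp add: algebra_simps)
      moreover have "(1 - t) * v$j \<le> (1 - t) * p$j" using b t1 by (simp add: mult_left_mono)
      moreover have "t * v$j < t * q$j" using a t0 by simp
      ultimately show "v$j < y$j" by (simp add: algebra_simps)
    qed
  qed
  have "y \<in> U_flat i V v" using yS ydi unfolding U_flat_def by auto
  moreover have "dist y p < e"
  proof -
    have "dist y p = t * norm (q - p)" unfolding y_def dist_norm using t0 by simp
    also have "\<dots> \<le> e / (norm (q - p) + 1) * norm (q - p)"
      by (intro mult_right_mono) (auto simp: t_def)
    also have "\<dots> < e"
    proof -
      have n: "norm (q - p) \<ge> 0" by simp
      have "e * norm (q - p) < e * (norm (q - p) + 1)" using e by simp
      moreover have pos: "norm (q - p) + 1 > 0" using n by linarith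
      ultimately have "e * norm (q - p) / (norm (q - p) + 1) < e"
        by (simp add: pos_divide_less_eq[OF pos] mult.commute)
      then show ?thesis by simp
    qed
    finally show ?thesis .
  qed
  ultimately show "\<exists>y\<in>U_flat i V v. dist y p < e" by blast
qed

lemma L3:
  assumes "dom_antichain V" "v \<in> V" "w \<in> V" "v \<in> closure (U_flat i V w)"
  shows "v = w"
proof -
  have "dom_le w v" using closure_U_sub assms(4) unfolding dom_le_def by blast
  then show ?thesis using assms(1-3) unfolding dom_antichain_def by metis
qed

lemma L4:
  assumes "finite V" "w \<in> V" "p \<in> closure (U_flat i V w)"
  shows "\<exists>q\<in>orth_surface V. dom_i i q w \<and> dom_le w p \<and> dom_le p q"
proof -
  have pw: "p$i = w$i" "\<And>j. w$j \<le> p$j" using closure_U_sub assms(3) by blast+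
  define D where "D = (\<lambda>(u,j). \<bar>p$j - u$j\<bar>) ` {(u,j). u \<in> V \<and> p$j \<noteq> u$j}"
  have fD: "finite D" unfolding D_def
    by (rule finite_imageI, rule finite_subset[of _ "V \<times> UNIV"]) (auto simp: assms(1))
  define d where "d = Min (insert 1 D)"
  have Dpos: "\<forall>x\<in>insert 1 D. x > 0" unfolding D_def by auto
  have d0: "d > 0" unfolding d_def using fD Dpos by simp
  have dle: "d \<le> \<bar>p$j - u$j\<bar>" if "u \<in> V" "p$j \<noteq> u$j" for u j
  proof -
    have "\<bar>p$j - u$j\<bar> \<in> D" unfolding D_def using that by force
    then show ?thesis unfolding d_def using fD by simp
  qed
  obtain x where xU: "x \<in> U_flat i V w" and dx: "dist x p < d"
    using assms(3) d0 unfolding closure_approachable by blast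
  have xS: "x \<in> orth_surface V" and xd: "dom_i i x w" using xU unfolding U_flat_def by auto
  have xc: "\<bar>x$j - p$j\<bar> < d" for j
    using component_le_norm_cart[of "x - p" j] dx unfolding dist_norm by simp
  define q where "q = (\<chi> j. if j = i then w$i else max (p$j) (x$j))"
  have qi: "q$i = w$i" unfolding q_def by simp
  have qj: "q$j = max (p$j) (x$j)" if "j \<noteq> i" for j unfolding q_def using that by simp
  have xwj: "w$j < x$j" if "j \<noteq> i" for j using xd that unfolding dom_i_def by auto
  have qdi: "dom_i i q w" unfolding dom_i_def using qi qj xwj by fastforce
  have wq: "dom_le w q" unfolding dom_le_def
    by (metis qdi dom_i_def order.strict_implies_order order_refl)
  have pq: "dom_le p q" unfolding dom_le_def using qi qj pw(1) by (metis max.cobounded1 order_refl)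
  have wp: "dom_le w p" unfolding dom_le_def using pw by blast
  have "\<not> strict_dom q u" if u: "u \<in> V" for u
  proof
    assume sq: "strict_dom q u"
    have "strict_dom x u" unfolding strict_dom_def
    proof
      fix j
      show "u$j < x$j"
      proof (cases "j = i")
        case True
        then show ?thesis using sq qi xd unfolding strict_dom_def dom_i_def by metis
      next
        case False
        then have uq: "u$j < max (p$j) (x$j)" using sq qj unfolding strict_dom_def by metis
        show ?thesis
        proof (cases "p$j \<le> x$j")
          case True then show ?thesis using uq by simp
        next
          case False
          then have "u$j < p$j" using uq by simp
          then have "d \<le> p$j - u$j" using dle[OF u, of j] by simp
          then show ?thesis using xc[of j] by simp
        qed
      qed
    qed
    then show False using xS u unfolding orth_surface_def by blast
  qed
  then have "q \<in> orth_surface V" using wq assms(2) unfolding orth_surface_def by blast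
  then show ?thesis using qdi wp pq by blast
qed

theorem lemma4p3:
  fixes V :: "(real^'d) set" and p :: "real^'d" and F :: "(real^'d) set" and i :: 'd
  assumes "finite V" and "dom_antichain V"
    and "p \<in> orth_surface V"
    and "is_i_flat i V F"
  shows "p \<in> F \<longleftrightarrow>
    (\<exists>v \<in> F \<inter> V. \<exists>q \<in> orth_surface V. dom_i i q v \<and> dom_le v p \<and> dom_le p q)"
proof -
  obtain v0 where v0: "v0 \<in> V" "F = i_flat_of i V v0" using assms(4) unfolding is_i_flat_def by blast
  define C where "C = {w. (v0, w) \<in> (sim_i i V)\<^sup>*}"
  have CV: "C \<subseteq> V"
  proof
    fix w assume "w \<in> C"
    then have "(v0, w) \<in> (sim_i i V)\<^sup>*" unfolding C_def by simp
    then show "w \<in> V"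
      by (induction rule: rtrancl_induct) (auto simp: v0 sim_i_def)
  qed
  have fC: "finite C" using CV assms(1) finite_subset by blast
  have Feq: "F = closure (\<Union> (U_flat i V ` C))"
    unfolding v0 i_flat_of_def C_def by (rule arg_cong[where f=closure]) blast
  have Fsub: "F \<subseteq> (\<Union>w\<in>C. closure (U_flat i V w))"
    unfolding Feq
    by (rule closure_minimal) (auto intro: closed_Union fC closure_subset[THEN subsetD])
  have subF: "closure (U_flat i V w) \<subseteq> F" if "w \<in> C" for w
    unfolding Feq using that by (intro closure_mono) blast
  show ?thesis
  proof
    assume "p \<in> F"
    then obtain w where wC: "w \<in> C" and pw: "p \<in> closure (U_flat i V w)" using Fsub by blast
    have wV: "w \<in> V" using wC CV by blast
    obtain x where x: "x \<in> U_flat i V w" using pw by (metis closure_empty empty_iff equals0I)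
    have "dom_le w x" using x unfolding U_flat_def dom_i_def dom_le_def
      by (auto intro: less_imp_le) (metis order.strict_implies_order order_refl)
    then have "w \<in> closure (U_flat i V w)"
      by (intro L2[OF wV x]) (auto simp: dom_le_def)
    then have "w \<in> F \<inter> V" using subF[OF wC] wV by blast
    then show "\<exists>v \<in> F \<inter> V. \<exists>q \<in> orth_surface V. dom_i i q v \<and> dom_le v p \<and> dom_le p q"
      using L4[OF assms(1) wV pw] by blast
  next
    assume "\<exists>v \<in> F \<inter> V. \<exists>q \<in> orth_surface V. dom_i i q v \<and> dom_le v p \<and> dom_le p q"
    then obtain v q where v: "v \<in> F" "v \<in> V" and q: "q \<in> orth_surface V" "dom_i i q v"
      "dom_le v p" "dom_le p q" by blast
    obtain w where wC: "w \<in> C" and vw: "v \<in> closure (U_flat i V w)" using Fsub v(1) by blast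
    have "v = w" using L3[OF assms(2) v(2) _ vw] wC CV by blast
    have qU: "q \<in> U_flat i V v" using q unfolding U_flat_def by blast
    have "p \<in> closure (U_flat i V v)" using L2[OF v(2) qU q(3) q(4)] .
    then show "p \<in> F" using subF wC \<open>v = w\<close> by blast
  qed
qed

end
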